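(* Let $f:\{0,1\}^n\to\{0,1\}$ be a total Boolean function. Then $\mathsf{maxPI}(f)\le\mathsf{sumPI}(f)^4$.
   Context: With $p=\{p_x\}$ ranging over families of probability distributions on $[n]$, $$\mathsf{sumPI}(f)=\min_{p}\ \max_{x,y:\ f(x)\neq f(y)} \frac{1}{\sum_{i:\,x_i\neq y_i}\sqrt{p_x(i)p_y(i)}},\qquad \mathsf{maxPI}(f)=\min_{p}\ \max_{x,y:\ f(x)\neq f(y)} \frac{1}{\max_{i:\,x_i\neq y_i}\sqrt{p_x(i)p_y(i)}}.$$ *)

theory Defs
  imports "HOL-Analysis.Analysis"
begin

text \<open>Inputs in {0,1}^n are bool lists of length n; coordinates are 0..n-1.
  A family of probability distributions on [n], one for each input x.\<close>

definition prob_family :: "nat \<Rightarrow> (bool list \<Rightarrow> nat \<Rightarrow> real) \<Rightarrow> bool" where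
  "prob_family n p \<longleftrightarrow>
     (\<forall>x. length x = n \<longrightarrow> (\<forall>i<n. 0 \<le> p x i) \<and> (\<Sum>i<n. p x i) = 1)"

definition diff_pairs :: "nat \<Rightarrow> (bool list \<Rightarrow> bool) \<Rightarrow> (bool list \<times> bool list) set" where
  "diff_pairs n f = {(x, y). length x = n \<and> length y = n \<and> f x \<noteq> f y}"

definition diff_coords :: "nat \<Rightarrow> bool list \<Rightarrow> bool list \<Rightarrow> nat set" where
  "diff_coords n x y = {i. i < n \<and> x ! i \<noteq> y ! i}"

text \<open>Values in ennreal: 1/0 = \<infinity>; max over empty set of pairs (constant f) is 0.\<close>

definition sumPI :: "nat \<Rightarrow> (bool list \<Rightarrow> bool) \<Rightarrow> ennreal" where
  "sumPI n f = (INF p \<in> {p. prob_family n p}.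
      SUP xy \<in> diff_pairs n f.
        inverse (ennreal (\<Sum>i \<in> diff_coords n (fst xy) (snd xy).
                            sqrt (p (fst xy) i * p (snd xy) i))))"

definition maxPI :: "nat \<Rightarrow> (bool list \<Rightarrow> bool) \<Rightarrow> ennreal" where
  "maxPI n f = (INF p \<in> {p. prob_family n p}.
      SUP xy \<in> diff_pairs n f.
        inverse (ennreal (Max ((\<lambda>i. sqrt (p (fst xy) i * p (snd xy) i))
                                 ` diff_coords n (fst xy) (snd xy)))))"

end

theory Submission
  imports Defs
begin

definition flipS :: "nat set \<Rightarrow> bool list \<Rightarrow> bool list" where
  "flipS B x = map (\<lambda>i. if i \<in> B then \<not> x!i else x!i) [0..<length x]"

lemma flipS_length[simp]: "length (flipS B x) = length x"
  by (simp add: flipS_def)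

lemma flipS_nth[simp]: "i < length x \<Longrightarrow> flipS B x ! i = (if i \<in> B then \<not> x!i else x!i)"
  by (simp add: flipS_def)

lemma flipS_empty[simp]: "flipS {} x = x"
  by (rule nth_equalityI) auto

lemma diff_coords_flipS:
  assumes "length x = n" "B \<subseteq> {..<n}"
  shows "diff_coords n x (flipS B x) = B"
  using assms unfolding diff_coords_def by (auto split: if_splits)

lemma flipS_single:
  assumes "i \<in> B"
  shows "flipS {i} (flipS B x) = flipS (B - {i}) x"
  by (rule nth_equalityI) (use assms in auto)

lemma flipS_diff:
  assumes "length x = n" "length z = n"
  shows "z = flipS (diff_coords n x z) x"
  by (rule nth_equalityI) (use assms in \<open>auto simp: diff_coords_def\<close>)

lemma amgm:
  fixes a c t :: real
  assumes "0 \<le> a" "0 \<le> c" "0 < t"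
  shows "sqrt (a * c) \<le> (t * a + c / t) / 2"
proof -
  have "sqrt (a*c) = sqrt ((t*a) * (c/t))" using assms by simp
  also have "\<dots> \<le> (t * a + c / t) / 2"
    using arith_geo_mean_sqrt[of "t*a" "c/t"] assms by simp
  finally show ?thesis .
qed

lemma adv_choice:
  assumes pf: "prob_family n p" and lx: "length x = n" and fin: "finite F" and ne: "F \<noteq> {}"
    and sub: "\<forall>B\<in>F. B \<subseteq> {..<n}"
    and dis: "\<forall>A\<in>F. \<forall>B\<in>F. A \<noteq> B \<longrightarrow> A \<inter> B = {}"
  shows "\<exists>B\<in>F. (\<Sum>i\<in>B. sqrt (p x i * p (flipS B x) i)) \<le> 1 / sqrt (card F)"
proof (rule ccontr)
  assume "\<not> ?thesis"
  hence gt: "\<forall>B\<in>F. 1 / sqrt (card F) < (\<Sum>i\<in>B. sqrt (p x i * p (flipS B x) i))" by auto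
  define t where "t = sqrt (card F)"
  have cpos: "card F > 0" using fin ne by (simp add: card_gt_0_iff)
  have tpos: "t > 0" using cpos by (simp add: t_def)
  have tt: "t * t = card F" unfolding t_def by simp
  have px: "\<forall>i<n. 0 \<le> p x i" "(\<Sum>i<n. p x i) = 1" using pf lx unfolding prob_family_def by auto
  have py: "\<And>B. (\<forall>i<n. 0 \<le> p (flipS B x) i) \<and> (\<Sum>i<n. p (flipS B x) i) = 1"
    using pf lx unfolding prob_family_def by auto
  have finB: "\<forall>B\<in>F. finite B" using sub finite_subset by blast
  have "(\<Sum>B\<in>F. 1 / t) < (\<Sum>B\<in>F. \<Sum>i\<in>B. sqrt (p x i * p (flipS B x) i))"
    by (rule sum_strict_mono[OF fin ne]) (use gt t_def in auto)
  hence lhs: "card F / t < (\<Sum>B\<in>F. \<Sum>i\<in>B. sqrt (p x i * p (flipS B x) i))" by simp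
  have "(\<Sum>B\<in>F. \<Sum>i\<in>B. sqrt (p x i * p (flipS B x) i))
      \<le> (\<Sum>B\<in>F. \<Sum>i\<in>B. (t * p x i + p (flipS B x) i / t) / 2)"
  proof (intro sum_mono)
    fix B i assume "B \<in> F" "i \<in> B"
    hence "i < n" using sub by auto
    show "sqrt (p x i * p (flipS B x) i) \<le> (t * p x i + p (flipS B x) i / t) / 2"
      by (rule amgm) (use px py tpos \<open>i<n\<close> in auto)
  qed
  also have "\<dots> = (\<Sum>B\<in>F. \<Sum>i\<in>B. (t/2) * p x i + (1/(2*t)) * p (flipS B x) i)"
    by (intro sum.cong refl) (use tpos in \<open>simp add: field_simps\<close>)
  also have "\<dots> = (t/2) * (\<Sum>B\<in>F. \<Sum>i\<in>B. p x i) + (1/(2*t)) * (\<Sum>B\<in>F. \<Sum>i\<in>B. p (flipS B x) i)"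
    by (simp add: sum.distrib sum_distrib_left)
  also have "\<dots> \<le> (t/2) * 1 + (1/(2*t)) * card F"
  proof -
    have "(\<Sum>B\<in>F. \<Sum>i\<in>B. p x i) = (\<Sum>i\<in>\<Union>F. p x i)"
      using sum.Union_disjoint[OF finB dis, of "p x"] by simp
    also have "\<dots> \<le> (\<Sum>i<n. p x i)"
      by (rule sum_mono2) (use sub px in auto)
    finally have 1: "(\<Sum>B\<in>F. \<Sum>i\<in>B. p x i) \<le> 1" using px by simp
    have "(\<Sum>B\<in>F. \<Sum>i\<in>B. p (flipS B x) i) \<le> (\<Sum>B\<in>F. 1)"
    proof (rule sum_mono)
      fix B assume "B \<in> F"
      have "(\<Sum>i\<in>B. p (flipS B x) i) \<le> (\<Sum>i<n. p (flipS B x) i)"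
        by (rule sum_mono2) (use sub py \<open>B \<in> F\<close> in auto)
      thus "(\<Sum>i\<in>B. p (flipS B x) i) \<le> 1" using py by simp
    qed
    hence 2: "(\<Sum>B\<in>F. \<Sum>i\<in>B. p (flipS B x) i) \<le> card F" by simp
    have "(t/2) * (\<Sum>B\<in>F. \<Sum>i\<in>B. p x i) \<le> (t/2) * 1" using 1 tpos by simp
    moreover have "(1/(2*t)) * (\<Sum>B\<in>F. \<Sum>i\<in>B. p (flipS B x) i) \<le> (1/(2*t)) * card F"
      using 2 tpos by (simp, intro divide_right_mono) auto
    ultimately show ?thesis by simp
  qed
  also have "\<dots> = card F / t" using tt tpos by (simp add: field_simps)
  finally show False using lhs by simp
qed


lemma sum_lb:
  assumes lx: "length x = n" and fin: "finite F" and ne: "F \<noteq> {}"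
    and sub: "\<forall>B\<in>F. B \<subseteq> {..<n}"
    and dis: "\<forall>A\<in>F. \<forall>B\<in>F. A \<noteq> B \<longrightarrow> A \<inter> B = {}"
    and sens: "\<forall>B\<in>F. f (flipS B x) \<noteq> f x"
  shows "ennreal (sqrt (card F)) \<le> sumPI n f"
  unfolding sumPI_def
proof (rule INF_greatest)
  fix p assume "p \<in> {p. prob_family n p}"
  hence pf: "prob_family n p" by simp
  obtain B where B: "B \<in> F" and le: "(\<Sum>i\<in>B. sqrt (p x i * p (flipS B x) i)) \<le> 1 / sqrt (card F)"
    using adv_choice[OF pf lx fin ne sub dis] by blast
  define y where "y = flipS B x"
  have ly: "length y = n" using lx by (simp add: y_def)
  have pair: "(x, y) \<in> diff_pairs n f" using lx ly sens B by (simp add: diff_pairs_def y_def)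
  have dc: "diff_coords n x y = B" using diff_coords_flipS[OF lx] sub B by (simp add: y_def)
  define \<sigma> where "\<sigma> = (\<Sum>i\<in>B. sqrt (p x i * p y i))"
  have px: "\<forall>i<n. 0 \<le> p x i" "\<forall>i<n. 0 \<le> p y i" using pf lx ly unfolding prob_family_def by auto
  have Bn: "B \<subseteq> {..<n}" using sub B by auto
  have "\<sigma> \<ge> 0" unfolding \<sigma>_def
    by (rule sum_nonneg) (use px Bn in \<open>auto intro!: mult_nonneg_nonneg\<close>)
  have cpos: "card F > 0" using fin ne by (simp add: card_gt_0_iff)
  have key: "ennreal (sqrt (card F)) \<le> inverse (ennreal \<sigma>)"
  proof (cases "\<sigma> = 0")
    case True thus ?thesis by simp
  next
    case False
    hence sp: "\<sigma> > 0" using \<open>\<sigma> \<ge> 0\<close> by simp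
    have "\<sigma> \<le> 1 / sqrt (card F)" using le by (simp add: \<sigma>_def y_def)
    hence "\<sigma> * sqrt (card F) \<le> 1" using cpos by (simp add: field_simps)
    hence "sqrt (card F) \<le> inverse \<sigma>" using sp by (simp add: field_simps)
    thus ?thesis using sp by (simp add: inverse_ennreal ennreal_leI)
  qed
  show "ennreal (sqrt (card F)) \<le> (SUP xy\<in>diff_pairs n f.
          inverse (ennreal (\<Sum>i\<in>diff_coords n (fst xy) (snd xy). sqrt (p (fst xy) i * p (snd xy) i))))"
    by (rule SUP_upper2[OF pair]) (use key dc in \<open>simp add: \<sigma>_def\<close>)
qed

definition minsens :: "nat \<Rightarrow> (bool list \<Rightarrow> bool) \<Rightarrow> bool list \<Rightarrow> nat set \<Rightarrow> bool" where
  "minsens n f x B \<longleftrightarrow> B \<subseteq> {..<n} \<and> f (flipS B x) \<noteq> f x \<and> (\<forall>B'. B' \<subset> B \<longrightarrow> f (flipS B' x) = f x)"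

lemma cert_exists:
  assumes lx: "length x = n"
  shows "\<exists>F. finite F \<and> (\<forall>B\<in>F. minsens n f x B) \<and> (\<forall>A\<in>F. \<forall>B\<in>F. A \<noteq> B \<longrightarrow> A \<inter> B = {})
     \<and> (\<forall>z. length z = n \<longrightarrow> (\<forall>i\<in>\<Union>F. z!i = x!i) \<longrightarrow> f z = f x)"
proof -
  define Fams where "Fams = {F. F \<subseteq> Pow {..<n} \<and> (\<forall>A\<in>F. \<forall>B\<in>F. A \<noteq> B \<longrightarrow> A \<inter> B = {}) \<and> (\<forall>B\<in>F. minsens n f x B)}"
  have finF: "finite Fams"
    by (rule finite_subset[of _ "Pow (Pow {..<n})"]) (auto simp: Fams_def)
  have "{} \<in> Fams" by (simp add: Fams_def)
  hence ne: "card ` Fams \<noteq> {}" by blast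
  obtain F where F: "F \<in> Fams" "card F = Max (card ` Fams)"
    using Max_in[OF finite_imageI[OF finF] ne] by auto
  have maxF: "\<And>G. G \<in> Fams \<Longrightarrow> card G \<le> card F"
    using F(2) Max_ge[OF finite_imageI[OF finF]] by auto
  have finFF: "finite F"
    by (rule finite_subset[of F "Pow {..<n}"]) (use F(1) in \<open>auto simp: Fams_def\<close>)
  have Fprops: "F \<subseteq> Pow {..<n}" "\<forall>A\<in>F. \<forall>B\<in>F. A \<noteq> B \<longrightarrow> A \<inter> B = {}" "\<forall>B\<in>F. minsens n f x B"
    using F(1) unfolding Fams_def by auto
  have cert: "f z = f x" if lz: "length z = n" and agree: "\<forall>i\<in>\<Union>F. z!i = x!i" for z
  proof (rule ccontr)
    assume neq: "f z \<noteq> f x"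
    define D where "D = diff_coords n x z"
    have zD: "z = flipS D x" using flipS_diff[OF lx lz] by (simp add: D_def)
    have Dsub: "D \<subseteq> {..<n}" by (auto simp: D_def diff_coords_def)
    define S where "S = {B. B \<subseteq> D \<and> f (flipS B x) \<noteq> f x}"
    have finS: "finite S"
      by (rule finite_subset[of _ "Pow D"]) (use Dsub finite_subset in \<open>auto simp: S_def\<close>)
    have "D \<in> S" using neq zD by (simp add: S_def)
    hence "S \<noteq> {}" by blast
    from finite_has_minimal[OF finS this]
    obtain B0 where B0: "B0 \<in> S" and minB0: "\<forall>b\<in>S. b \<le> B0 \<longrightarrow> B0 = b"
      by blast
    have ms: "minsens n f x B0"
      unfolding minsens_def
    proof (intro conjI allI impI)
      show "B0 \<subseteq> {..<n}" using B0 Dsub by (auto simp: S_def)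
      show "f (flipS B0 x) \<noteq> f x" using B0 by (simp add: S_def)
      fix B' assume BB: "B' \<subset> B0"
      show "f (flipS B' x) = f x"
      proof (rule ccontr)
        assume "f (flipS B' x) \<noteq> f x"
        hence "B' \<in> S" using BB B0 by (auto simp: S_def)
        hence "B0 = B'" using minB0 BB by auto
        thus False using BB by simp
      qed
    qed
    have B0ne: "B0 \<noteq> {}" using B0 by (auto simp: S_def)
    have B0U: "B0 \<inter> \<Union>F = {}"
    proof -
      have "\<And>i. i \<in> B0 \<Longrightarrow> i \<notin> \<Union>F"
      proof -
        fix i assume "i \<in> B0"
        hence "i \<in> D" using B0 by (auto simp: S_def)
        hence "z!i \<noteq> x!i" by (auto simp: D_def diff_coords_def)
        thus "i \<notin> \<Union>F" using agree by auto
      qed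
      thus ?thesis by blast
    qed
    have notin: "B0 \<notin> F" using B0U B0ne by blast
    have h: "\<forall>A\<in>F. A \<inter> B0 = {}" using B0U by blast
    have i1: "insert B0 F \<subseteq> Pow {..<n}" using Fprops(1) ms by (auto simp: minsens_def)
    have i2: "\<forall>A\<in>insert B0 F. \<forall>B\<in>insert B0 F. A \<noteq> B \<longrightarrow> A \<inter> B = {}"
      using Fprops(2) h by (simp add: Int_commute)
    have i3: "\<forall>B\<in>insert B0 F. minsens n f x B" using Fprops(3) ms by simp
    have "insert B0 F \<in> Fams"
      unfolding Fams_def using i1 i2 i3 by simp
    hence "card (insert B0 F) \<le> card F" by (rule maxF)
    thus False using notin finFF by simp
  qed
  show ?thesis using finFF Fprops cert by blast
qed


lemma sqrt_card_le:
  assumes "ennreal (sqrt (real k)) \<le> ennreal s" "s \<ge> 0"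
  shows "real k \<le> s^2"
proof -
  have "sqrt (real k) \<le> s" using assms by (simp add: ennreal_le_iff)
  hence "(sqrt (real k))^2 \<le> s^2" by (intro power_mono) auto
  thus ?thesis by simp
qed

lemma card_bound:
  assumes lx: "length x = n" and S: "sumPI n f = ennreal s" and s0: "s \<ge> 0"
    and finF: "finite F" and ms: "\<forall>B\<in>F. minsens n f x B"
    and dis: "\<forall>A\<in>F. \<forall>B\<in>F. A \<noteq> B \<longrightarrow> A \<inter> B = {}"
  shows "real (card (\<Union>F)) \<le> s^4"
proof -
  have Bb: "real (card B) \<le> s^2" if BF: "B \<in> F" for B
  proof -
    have m: "minsens n f x B" using ms BF by auto
    hence Bn: "B \<subseteq> {..<n}" by (simp add: minsens_def)
    hence finB: "finite B" using finite_subset by blast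
    have Bne: "B \<noteq> {}" using m by (auto simp: minsens_def)
    define y where "y = flipS B x"
    have ly: "length y = n" using lx by (simp add: y_def)
    define G where "G = (\<lambda>i. {i}) ` B"
    have cG: "card G = card B" unfolding G_def by (rule card_image) (simp add: inj_on_def)
    have sens: "\<forall>C\<in>G. f (flipS C y) \<noteq> f y"
    proof
      fix C assume "C \<in> G"
      then obtain i where i: "i \<in> B" "C = {i}" by (auto simp: G_def)
      have "flipS C y = flipS (B - {i}) x" using flipS_single[OF i(1)] i(2) by (simp add: y_def)
      moreover have "f (flipS (B - {i}) x) = f x" using m i(1) by (auto simp: minsens_def)
      moreover have "f y \<noteq> f x" using m by (simp add: minsens_def y_def)
      ultimately show "f (flipS C y) \<noteq> f y" by simp
    qed
    have "ennreal (sqrt (card G)) \<le> sumPI n f"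
      by (rule sum_lb[OF ly]) (use finB Bne Bn sens in \<open>auto simp: G_def\<close>)
    thus ?thesis using cG S s0 sqrt_card_le by simp
  qed
  have Fb: "real (card F) \<le> s^2"
  proof (cases "F = {}")
    case True thus ?thesis by simp
  next
    case False
    have "ennreal (sqrt (card F)) \<le> sumPI n f"
      by (rule sum_lb[OF lx finF False]) (use ms dis in \<open>auto simp: minsens_def\<close>)
    thus ?thesis using S s0 sqrt_card_le by simp
  qed
  have "real (card (\<Union>F)) \<le> real (\<Sum>B\<in>F. card B)"
    using card_Union_le_sum_card by (simp only: of_nat_le_iff)
  also have "\<dots> = (\<Sum>B\<in>F. real (card B))" by simp
  also have "\<dots> \<le> (\<Sum>B\<in>F. s^2)" by (rule sum_mono) (rule Bb)
  also have "\<dots> = real (card F) * s^2" by simp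
  also have "\<dots> \<le> s^2 * s^2" by (rule mult_right_mono[OF Fb]) simp
  also have "\<dots> = s^4" by (simp add: power_add[symmetric])
  finally show ?thesis .
qed


theorem mainTheorem13:
  fixes n :: nat and f :: "bool list \<Rightarrow> bool"
  shows "maxPI n f \<le> sumPI n f ^ 4"
proof (cases "sumPI n f = top")
  case True
  have "sumPI n f ^ 4 = top" unfolding True by (simp only: top_power_ennreal) simp
  thus ?thesis by (simp only: top_greatest)
next
  case False
  define s where "s = enn2real (sumPI n f)"
  have S: "sumPI n f = ennreal s" using False by (simp add: s_def ennreal_enn2real_if)
  have s0: "s \<ge> 0" by (simp add: s_def)
  have "\<exists>p. prob_family n p"
  proof (rule ccontr)
    assume "\<not> ?thesis"
    hence "{p. prob_family n p} = {}" by auto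
    hence "sumPI n f = top" by (simp add: sumPI_def)
    thus False using False by simp
  qed
  then obtain p0 where p0: "prob_family n p0" by blast
  have npos: "n > 0"
  proof (rule ccontr)
    assume "\<not> n > 0"
    hence "n = 0" by simp
    thus False using p0 unfolding prob_family_def by (auto dest: spec[of _ "[]"])
  qed
  define P where "P = (\<lambda>x U. U \<subseteq> {..<n} \<and> (\<forall>z. length z = n \<longrightarrow> (\<forall>i\<in>U. z!i = x!i) \<longrightarrow> f z = f x)
      \<and> real (card U) \<le> s^4)"
  have exU: "\<forall>x. \<exists>U. length x = n \<longrightarrow> P x U"
  proof
    fix x
    show "\<exists>U. length x = n \<longrightarrow> P x U"
    proof (cases "length x = n")
      case True
      then obtain F where F: "finite F" "\<forall>B\<in>F. minsens n f x B"
          "\<forall>A\<in>F. \<forall>B\<in>F. A \<noteq> B \<longrightarrow> A \<inter> B = {}"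
          "\<forall>z. length z = n \<longrightarrow> (\<forall>i\<in>\<Union>F. z!i = x!i) \<longrightarrow> f z = f x"
        using cert_exists[OF True, of f] by blast
      have u1: "\<Union>F \<subseteq> {..<n}" using F(2) unfolding minsens_def by blast
      have u2: "real (card (\<Union>F)) \<le> s^4" by (rule card_bound[OF True S s0 F(1-3)])
      have "P x (\<Union>F)" unfolding P_def using u1 u2 F(4) by blast
      thus ?thesis by blast
    qed auto
  qed
  obtain Uf where Uf0: "\<forall>x. length x = n \<longrightarrow> P x (Uf x)" using choice[OF exU] by blast
  have Uf: "\<And>x. length x = n \<Longrightarrow> P x (Uf x)" using Uf0 by blast
  define q where "q = (\<lambda>x i. if Uf x = {} then (if i = 0 then 1 else 0)
      else (if i \<in> Uf x then 1 / real (card (Uf x)) else (0::real)))"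
  have pq: "prob_family n q" unfolding prob_family_def
  proof (rule allI, rule impI, rule conjI)
    fix x :: "bool list" assume lx: "length x = n"
    show "\<forall>i<n. 0 \<le> q x i" by (simp add: q_def)
    have Us: "Uf x \<subseteq> {..<n}" using Uf[OF lx] by (simp add: P_def)
    show "(\<Sum>i<n. q x i) = 1"
    proof (cases "Uf x = {}")
      case True thus ?thesis using npos by (simp add: q_def)
    next
      case False
      have finU: "finite (Uf x)" using Us finite_subset by blast
      have "(\<Sum>i<n. q x i) = (\<Sum>i<n. if i \<in> Uf x then 1 / real (card (Uf x)) else 0)"
        using False by (simp add: q_def)
      also have "\<dots> = (\<Sum>i\<in>{..<n} \<inter> Uf x. 1 / real (card (Uf x)))"
        by (rule sum.inter_restrict[symmetric]) simp
      also have "{..<n} \<inter> Uf x = Uf x" using Us by blast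
      finally show ?thesis using False finU by simp
    qed
  qed
  have "maxPI n f \<le> (SUP xy \<in> diff_pairs n f.
        inverse (ennreal (Max ((\<lambda>i. sqrt (q (fst xy) i * q (snd xy) i))
                                 ` diff_coords n (fst xy) (snd xy)))))"
    unfolding maxPI_def by (rule INF_lower) (use pq in simp)
  also have "\<dots> \<le> ennreal (s^4)"
  proof (rule SUP_least)
    fix xy assume xy: "xy \<in> diff_pairs n f"
    obtain x y where xy_eq: "xy = (x, y)" by (cases xy)
    have lx: "length x = n" and ly: "length y = n" and fxy: "f x \<noteq> f y"
      using xy by (auto simp: diff_pairs_def xy_eq)
    have Px: "P x (Uf x)" and Py: "P y (Uf y)" using Uf lx ly by auto
    have "\<exists>i\<in>Uf x \<inter> Uf y. x!i \<noteq> y!i"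
    proof (rule ccontr)
      assume nex: "\<not> ?thesis"
      define z where "z = map (\<lambda>j. if j \<in> Uf x then x!j else y!j) [0..<n]"
      have lz: "length z = n" by (simp add: z_def)
      have zx: "\<forall>i\<in>Uf x. z!i = x!i" using Px by (auto simp: z_def P_def)
      have zy: "\<forall>i\<in>Uf y. z!i = y!i" using Py nex by (auto simp: z_def P_def)
      have "f z = f x" using Px lz zx by (simp add: P_def)
      moreover have "f z = f y" using Py lz zy by (simp add: P_def)
      ultimately show False using fxy by simp
    qed
    then obtain i where iU: "i \<in> Uf x" "i \<in> Uf y" and ixy: "x!i \<noteq> y!i" by blast
    have "i < n" using Px iU by (auto simp: P_def)
    have finUx: "finite (Uf x)" and finUy: "finite (Uf y)"
      using Px Py finite_subset by (auto simp: P_def)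
    define a where "a = real (card (Uf x))"
    define b where "b = real (card (Uf y))"
    have a1: "a \<ge> 1" using finUx iU by (auto simp: a_def Suc_le_eq card_gt_0_iff)
    have b1: "b \<ge> 1" using finUy iU by (auto simp: b_def Suc_le_eq card_gt_0_iff)
    have as: "a \<le> s^4" and bs: "b \<le> s^4" using Px Py by (auto simp: P_def a_def b_def)
    define t where "t = s^4"
    have t1: "t \<ge> 1" using a1 as by (simp add: t_def)
    have qv: "sqrt (q x i * q y i) = sqrt (1 / (a * b))"
      using iU by (auto simp: q_def a_def b_def)
    have abt: "a * b \<le> t * t" using a1 b1 as bs by (intro mult_mono) (auto simp: t_def)
    have abp: "0 < a * b" using a1 b1 by simp
    have ttp: "0 < t * t" using t1 by simp
    have "1 / (t * t) \<le> 1 / (a * b)"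
      by (rule divide_left_mono[OF abt]) (use abp ttp in simp_all)
    hence "sqrt (1 / (t * t)) \<le> sqrt (1 / (a * b))" by simp
    moreover have "sqrt (1 / (t * t)) = 1 / t" using t1 by (simp add: real_sqrt_divide)
    ultimately have v: "1 / t \<le> sqrt (q x i * q y i)" using qv by simp
    define M where "M = Max ((\<lambda>i. sqrt (q x i * q y i)) ` diff_coords n x y)"
    have idc: "i \<in> diff_coords n x y" using \<open>i < n\<close> ixy by (simp add: diff_coords_def)
    have "sqrt (q x i * q y i) \<le> M" unfolding M_def
      by (rule Max_ge) (use idc in \<open>auto simp: diff_coords_def\<close>)
    hence Mt: "1 / t \<le> M" using v by simp
    have tp: "1 / t > 0" using t1 by simp
    hence Mpos: "M > 0" using Mt by linarith
    have "inverse M \<le> inverse (1 / t)" by (rule le_imp_inverse_le[OF Mt tp])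
    hence "inverse M \<le> t" by simp
    hence "inverse (ennreal M) \<le> ennreal t" using Mpos by (simp add: inverse_ennreal ennreal_leI)
    thus "inverse (ennreal (Max ((\<lambda>i. sqrt (q (fst xy) i * q (snd xy) i)) ` diff_coords n (fst xy) (snd xy))))
          \<le> ennreal (s^4)"
      by (simp add: xy_eq M_def t_def)
  qed
  also have "\<dots> = sumPI n f ^ 4" using S s0 by (simp add: ennreal_power)
  finally show ?thesis .
qed

end
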